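(* Let $N$ be a natural number, $P=\{a\subseteq N: |a|\geq 2\}$, and let $\|\cdot\|_3$ be the graph coloring norm on subsets of $P$ (defined in the context). Let $k\geq 1$ and let $A\subseteq P$ satisfy $\|A\|_3=k$. Then $|A|\geq\binom{2^{k-1}+1}{2}$.
   Context: $N=\{0,\ldots,N-1\}$. For $A\subseteq P$ and $z\subseteq N$ let $A\restriction z=\{a\in A: a\subseteq z\}$. The relation "$\|A\|_3\geq m$" is defined recursively: $\|A\|_3\geq 0$ always; $\|A\|_3\geq 1$ iff $A\neq\emptyset$; for $m\geq 1$, $\|A\|_3\geq m+1$ iff for every $z\subseteq N$ either $\|A\restriction z\|_3\geq m$ or $\|A\restriction(N\setminus z)\|_3\geq m$. Then $\|A\|_3$ is the largest $m$ with $\|A\|_3\geq m$. *)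

theory Defs
  imports Main
begin

text \<open>The ground set N is represented as {..<N} = {0,...,N-1}.\<close>

definition pairsP :: "nat \<Rightarrow> nat set set" where
  "pairsP N = {a. a \<subseteq> {..<N} \<and> card a \<ge> 2}"

definition restr :: "nat set set \<Rightarrow> nat set \<Rightarrow> nat set set" where
  "restr A z = {a \<in> A. a \<subseteq> z}"

fun norm3_ge :: "nat \<Rightarrow> nat set set \<Rightarrow> nat \<Rightarrow> bool" where
  "norm3_ge N A 0 = True"
| "norm3_ge N A (Suc 0) = (A \<noteq> {})"
| "norm3_ge N A (Suc (Suc m)) =
     (\<forall>z. z \<subseteq> {..<N} \<longrightarrow>
        norm3_ge N (restr A z) (Suc m) \<or> norm3_ge N (restr A ({..<N} - z)) (Suc m))"

definition norm3 :: "nat \<Rightarrow> nat set set \<Rightarrow> nat" where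
  "norm3 N A = (GREATEST m. norm3_ge N A m)"

end

theory Submission
  imports Defs
begin

definition col :: "nat set set \<Rightarrow> nat \<Rightarrow> bool" where
  "col A t = (\<exists>f::nat\<Rightarrow>nat. (\<forall>x. f x < t) \<and> (\<forall>a\<in>A. \<exists>x\<in>a. \<exists>y\<in>a. f x \<noteq> f y))"

lemma col_mono: "col A t \<Longrightarrow> t \<le> t' \<Longrightarrow> col A t'"
  unfolding col_def by (meson less_le_trans)

lemma restr_sub: "A \<subseteq> pairsP N \<Longrightarrow> restr A z \<subseteq> pairsP N"
  unfolding restr_def by auto

lemma col_split1:
  assumes "col A (2 * 2^n)"
  shows "\<exists>z\<subseteq>{..<N}. col (restr A z) (2^n) \<and> col (restr A ({..<N} - z)) (2^n)"
proof -
  obtain f :: "nat \<Rightarrow> nat" where f: "\<forall>x. f x < 2*2^n" "\<forall>a\<in>A. \<exists>x\<in>a. \<exists>y\<in>a. f x \<noteq> f y"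
    using assms unfolding col_def by blast
  define z where "z = {x\<in>{..<N}. f x < 2^n}"
  have "col (restr A z) (2^n)"
    unfolding col_def
  proof (intro exI[of _ "\<lambda>x. if f x < 2^n then f x else 0"] conjI ballI allI)
    fix x show "(if f x < 2^n then f x else 0) < (2::nat)^n" by simp
  next
    fix a assume "a \<in> restr A z"
    then have "a \<in> A" "a \<subseteq> z" unfolding restr_def by auto
    then obtain x y where xy: "x\<in>a" "y\<in>a" "f x \<noteq> f y" using f by blast
    then have "x \<in> z" "y \<in> z" using \<open>a \<subseteq> z\<close> by auto
    then have "f x < 2^n" "f y < 2^n" unfolding z_def by auto
    then have "(if f x < 2^n then f x else 0) \<noteq> (if f y < 2^n then f y else 0)" using xy(3) by simp
    then show "\<exists>x\<in>a. \<exists>y\<in>a. (if f x < 2^n then f x else 0) \<noteq> (if f y < 2^n then f y else 0)"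
      using xy by blast
  qed
  moreover have "col (restr A ({..<N} - z)) (2^n)"
    unfolding col_def
  proof (intro exI[of _ "\<lambda>x. if f x \<ge> 2^n then f x - 2^n else 0"] conjI ballI allI)
    fix x show "(if f x \<ge> 2^n then f x - 2^n else 0) < (2::nat)^n" using f(1)[rule_format, of x] by (simp; arith)
  next
    fix a assume "a \<in> restr A ({..<N} - z)"
    then have "a \<in> A" "a \<subseteq> {..<N} - z" unfolding restr_def by auto
    then obtain x y where xy: "x\<in>a" "y\<in>a" "f x \<noteq> f y" using f by blast
    then have "x \<in> {..<N}" "x \<notin> z" "y \<in> {..<N}" "y \<notin> z" using \<open>a \<subseteq> {..<N} - z\<close> by auto
    then have "f x \<ge> 2^n" "f y \<ge> 2^n" unfolding z_def by auto
    then have "(if f x \<ge> 2^n then f x - 2^n else 0) \<noteq> (if f y \<ge> 2^n then f y - 2^n else 0)"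
      using xy(3) by simp
    then show "\<exists>x\<in>a. \<exists>y\<in>a. (if f x \<ge> 2^n then f x - 2^n else 0) \<noteq> (if f y \<ge> 2^n then f y - 2^n else 0)"
      using xy by blast
  qed
  moreover have "z \<subseteq> {..<N}" unfolding z_def by auto
  ultimately show ?thesis by blast
qed

lemma col_split2:
  assumes "A \<subseteq> pairsP N" "z \<subseteq> {..<N}" "col (restr A z) (2^n)" "col (restr A ({..<N} - z)) (2^n)"
  shows "col A (2 * 2^n)"
proof -
  obtain f1 :: "nat \<Rightarrow> nat" where f1: "\<forall>x. f1 x < 2^n" "\<forall>a\<in>restr A z. \<exists>x\<in>a. \<exists>y\<in>a. f1 x \<noteq> f1 y"
    using assms(3) unfolding col_def by blast
  obtain f2 :: "nat \<Rightarrow> nat" where f2: "\<forall>x. f2 x < 2^n" "\<forall>a\<in>restr A ({..<N} - z). \<exists>x\<in>a. \<exists>y\<in>a. f2 x \<noteq> f2 y"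
    using assms(4) unfolding col_def by blast
  show ?thesis unfolding col_def
  proof (intro exI[of _ "\<lambda>x. if x \<in> z then f1 x else 2^n + f2 x"] conjI ballI allI)
    fix x show "(if x \<in> z then f1 x else 2^n + f2 x) < 2 * (2::nat)^n"
      using f1(1)[rule_format, of x] f2(1)[rule_format, of x] by auto
  next
    fix a assume a: "a \<in> A"
    then have aN: "a \<subseteq> {..<N}" using assms(1) unfolding pairsP_def by auto
    show "\<exists>x\<in>a. \<exists>y\<in>a. (if x \<in> z then f1 x else 2^n + f2 x) \<noteq> (if y \<in> z then f1 y else 2^n + f2 y)"
    proof (cases "a \<subseteq> z")
      case True
      then obtain x y where xy: "x\<in>a" "y\<in>a" "f1 x \<noteq> f1 y" using f1(2) a unfolding restr_def by blast
      then have "x \<in> z" "y \<in> z" using True by auto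
      then have "(if x \<in> z then f1 x else 2^n + f2 x) \<noteq> (if y \<in> z then f1 y else 2^n + f2 y)"
        using xy(3) by simp
      then show ?thesis using xy by blast
    next
      case False
      show ?thesis
      proof (cases "a \<subseteq> {..<N} - z")
        case True
        then obtain x y where xy: "x\<in>a" "y\<in>a" "f2 x \<noteq> f2 y" using f2(2) a unfolding restr_def by blast
        then have "x \<notin> z" "y \<notin> z" using True by auto
        then have "(if x \<in> z then f1 x else 2^n + f2 x) \<noteq> (if y \<in> z then f1 y else 2^n + f2 y)"
          using xy(3) by simp
        then show ?thesis using xy by blast
      next
        case F2: False
        obtain x where "x \<in> a" "x \<notin> z" using False by auto
        moreover obtain y where "y \<in> a" "y \<in> z" using F2 aN by auto
        moreover have "f1 y < 2^n" using f1(1) by blast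
        ultimately have "(if x \<in> z then f1 x else 2^n + f2 x) \<noteq> (if y \<in> z then f1 y else 2^n + f2 y)"
          by simp
        then show ?thesis using \<open>x \<in> a\<close> \<open>y \<in> a\<close> by blast
      qed
    qed
  qed
qed

lemma norm_col: "A \<subseteq> pairsP N \<Longrightarrow> norm3_ge N A (Suc n) = (\<not> col A (2^n))"
proof (induction n arbitrary: A)
  case 0
  have "col A 1 = (A = {})"
  proof
    assume "col A 1"
    then obtain f :: "nat \<Rightarrow> nat" where "\<forall>x. f x < 1" "\<forall>a\<in>A. \<exists>x\<in>a. \<exists>y\<in>a. f x \<noteq> f y"
      unfolding col_def by blast
    then have "\<forall>x. f x = 0" "\<forall>a\<in>A. \<exists>x\<in>a. \<exists>y\<in>a. f x \<noteq> f y" by auto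
    then show "A = {}" by auto
  next
    assume "A = {}"
    then show "col A 1" unfolding col_def by (intro exI[of _ "\<lambda>_. 0"]) auto
  qed
  then show ?case by simp
next
  case (Suc n)
  have "norm3_ge N A (Suc (Suc n)) =
     (\<forall>z. z \<subseteq> {..<N} \<longrightarrow> \<not> col (restr A z) (2^n) \<or> \<not> col (restr A ({..<N} - z)) (2^n))"
    using Suc.IH[OF restr_sub[OF Suc.prems]] by simp
  also have "\<dots> = (\<not> col A (2^Suc n))"
    using col_split1[of A n N] col_split2[OF Suc.prems, of _ n] by auto
  finally show ?case .
qed

lemma col_big: "A \<subseteq> pairsP N \<Longrightarrow> col A (2^N)"
  unfolding col_def
proof (intro exI[of _ "\<lambda>x. min x (2^N - 1)"] conjI allI ballI)
  fix x have "(0::nat) < 2 ^ N" by simp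
  then show "min x (2 ^ N - 1) < (2::nat) ^ N" by linarith
next
  fix a assume "A \<subseteq> pairsP N" "a \<in> A"
  then have aN: "a \<subseteq> {..<N}" and c2: "card a \<ge> 2" unfolding pairsP_def by auto
  have "finite a" using aN finite_subset by blast
  then obtain b where "b \<subseteq> a" "card b = 2" using c2 obtain_subset_with_card_n by metis
  then obtain x y where xy: "x \<in> a" "y \<in> a" "x \<noteq> y" unfolding card_2_iff by blast
  have "x < N" "y < N" using aN xy by auto
  moreover have "N < 2^N" by (rule less_exp)
  ultimately have "x < 2^N" "y < 2^N" by linarith+
  then show "\<exists>x\<in>a. \<exists>y\<in>a. min x (2 ^ N - 1) \<noteq> min y (2 ^ N - 1)"
    using xy by (intro bexI[of _ x] bexI[of _ y]) auto
qed

lemma relabel_inj: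
  fixes i j c v w :: nat
  assumes "i < j" "j < c" "v < c" "w < c" "v \<noteq> i" "v \<noteq> j"
    and "(if w = j then i else if w = c - 1 then j else w) = (if v = j then i else if v = c - 1 then j else v)"
  shows "w = v"
proof (cases "v = c - 1")
  case True
  then show ?thesis using assms by (cases "w = j"; cases "w = c - 1") simp_all
next
  case False
  then show ?thesis using assms by (cases "w = j"; cases "w = c - 1") simp_all
qed

lemma merge:
  fixes f :: "nat \<Rightarrow> nat"
  assumes f1: "\<forall>x. f x < c" and f2: "\<forall>a\<in>A. \<exists>x\<in>a. \<exists>y\<in>a. f x \<noteq> f y"
    and ij: "i < j" "j < c" and no: "\<forall>a\<in>A. \<not> f ` a \<subseteq> {i, j}"
  shows "col A (c - 1)"
  unfolding col_def
proof (intro exI[of _ "\<lambda>x. if f x = j then i else if f x = c - 1 then j else f x"] conjI allI ballI)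
  fix x show "(if f x = j then i else if f x = c - 1 then j else f x) < c - 1"
    using f1[rule_format, of x] ij by auto
next
  fix a assume a: "a \<in> A"
  obtain x where x: "x \<in> a" "f x \<noteq> i" "f x \<noteq> j" using no a by auto
  obtain u v where uv: "u \<in> a" "v \<in> a" "f u \<noteq> f v" using f2 a by blast
  have "\<exists>y\<in>a. f y \<noteq> f x"
  proof (cases "f u = f x")
    case True
    then have "f v \<noteq> f x" using uv(3) by simp
    then show ?thesis using uv(2) by blast
  next
    case False
    then show ?thesis using uv(1) by blast
  qed
  then obtain y where y: "y \<in> a" "f y \<noteq> f x" by blast
  have inj: "f w = f x" if "(if f w = j then i else if f w = c - 1 then j else f w) =
                 (if f x = j then i else if f x = c - 1 then j else f x)" for w
    using relabel_inj[OF ij f1[rule_format, of x] f1[rule_format, of w] x(2) x(3) that] .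
  show "\<exists>x\<in>a. \<exists>y\<in>a. (if f x = j then i else if f x = c - 1 then j else f x) \<noteq>
        (if f y = j then i else if f y = c - 1 then j else f y)"
    using inj[of y] x y by blast
qed

lemma count:
  fixes f :: "nat \<Rightarrow> nat"
  assumes fin: "finite A" and f1: "\<forall>x. f x < c" and f2: "\<forall>a\<in>A. \<exists>x\<in>a. \<exists>y\<in>a. f x \<noteq> f y"
    and minimal: "\<not> col A (c - 1)"
  shows "c choose 2 \<le> card A"
proof -
  define S where "S = {s. s \<subseteq> {..<c} \<and> card s = 2}"
  have cS: "card S = c choose 2" unfolding S_def using n_subsets[of "{..<c}" 2] by simp
  have ex: "\<exists>e\<in>A. f ` e = s" if s: "s \<in> S" for s
  proof -
    have s2: "card s = 2" and sc: "s \<subseteq> {..<c}" using s unfolding S_def by auto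
    obtain p q where pq: "s = {p, q}" "p \<noteq> q" using s2 unfolding card_2_iff by blast
    obtain i j where sij: "s = {i, j}" "i < j"
    proof (cases "p < q")
      case True then show ?thesis using that pq by blast
    next
      case False then have "q < p" using pq(2) by simp
      moreover have "s = {q, p}" using pq(1) by (simp add: insert_commute)
      ultimately show ?thesis using that by blast
    qed
    have "j \<in> s" using sij(1) by simp
    then have "j < c" using sc by auto
    have "\<exists>a\<in>A. f ` a \<subseteq> {i, j}"
    proof (rule ccontr)
      assume "\<not> (\<exists>a\<in>A. f ` a \<subseteq> {i, j})"
      then have "\<forall>a\<in>A. \<not> f ` a \<subseteq> {i, j}" by blast
      then show False using merge[OF f1 f2 sij(2) \<open>j < c\<close>] minimal by simp
    qed
    then obtain a where a: "a \<in> A" "f ` a \<subseteq> {i, j}" by blast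
    obtain x y where xy: "x \<in> a" "y \<in> a" "f x \<noteq> f y" using f2 a(1) by blast
    have az: "\<forall>z\<in>a. f z \<in> {i, j}" using a(2) by (simp add: image_subset_iff)
    have fx: "f x \<in> {i, j}" "f y \<in> {i, j}" using az xy(1,2) by blast+
    have "{i, j} = {f x, f y}" using fx xy(3) by fastforce
    also have "\<dots> \<subseteq> f ` a" using xy(1,2) by auto
    finally have "f ` a = {i, j}" using a(2) by (rule subset_antisym[rotated])
    then have "f ` a = s" using sij(1) by simp
    then show ?thesis using a(1) by blast
  qed
  define h where "h s = (SOME e. e \<in> A \<and> f ` e = s)" for s
  have h: "h s \<in> A \<and> f ` (h s) = s" if "s \<in> S" for s
    unfolding h_def using someI_ex[OF ex[OF that, unfolded Bex_def]] .
  have "inj_on h S"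
  proof (rule inj_onI)
    fix s t assume st: "s \<in> S" "t \<in> S" "h s = h t"
    have "s = f ` h s" using h[OF st(1)] by simp
    also have "\<dots> = f ` h t" using st(3) by simp
    also have "\<dots> = t" using h[OF st(2)] by simp
    finally show "s = t" .
  qed
  moreover have "h ` S \<subseteq> A" using h by auto
  ultimately have "card S \<le> card A" using fin by (rule card_inj_on_le)
  then show ?thesis using cS by simp
qed

theorem theorem5p36:
  fixes N k :: nat and A :: "nat set set"
  assumes "A \<subseteq> pairsP N" and "k \<ge> 1" and "norm3 N A = k"
  shows "card A \<ge> (2 ^ (k - 1) + 1) choose 2"
proof -
  have cb: "col A (2^N)" using col_big[OF assms(1)] .
  have bound: "m \<le> N" if "norm3_ge N A m" for m
  proof (rule ccontr)
    assume "\<not> m \<le> N"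
    then obtain n where n: "m = Suc n" "N \<le> n" by (cases m) auto
    then have "\<not> col A (2^n)" using norm_col[OF assms(1)] that by simp
    moreover have "(2::nat)^N \<le> 2^n" using n by simp
    ultimately show False using col_mono[OF cb] by blast
  qed
  have "norm3_ge N A 0" by simp
  then have "norm3_ge N A (norm3 N A)" unfolding norm3_def by (rule GreatestI_nat) (rule bound)
  then have "norm3_ge N A (Suc (k - 1))" using assms by simp
  then have nc: "\<not> col A (2^(k-1))" using norm_col[OF assms(1)] by simp
  define c where "c = (LEAST c. col A c)"
  have cc: "col A c" unfolding c_def using cb by (rule LeastI)
  have cgt: "2^(k-1) < c"
  proof (rule ccontr)
    assume "\<not> 2^(k-1) < c"
    then show False using col_mono[OF cc] nc by simp
  qed
  have minimal: "\<not> col A (c - 1)"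
  proof
    assume "col A (c - 1)"
    then have "c \<le> c - 1" unfolding c_def by (rule Least_le)
    then show False using cgt by simp
  qed
  have fin: "finite A"
  proof (rule finite_subset[OF assms(1)])
    show "finite (pairsP N)" unfolding pairsP_def
      by (rule finite_subset[of _ "Pow {..<N}"]) auto
  qed
  obtain f :: "nat \<Rightarrow> nat" where f: "\<forall>x. f x < c" "\<forall>a\<in>A. \<exists>x\<in>a. \<exists>y\<in>a. f x \<noteq> f y"
    using cc unfolding col_def by blast
  have "c choose 2 \<le> card A" using count[OF fin f minimal] .
  moreover have "(2 ^ (k - 1) + 1) choose 2 \<le> c choose 2"
    using cgt by (intro binomial_right_mono) simp
  ultimately show ?thesis by simp
qed

end
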